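(* Let $\mathbb{K}$ be a field, $n\ge3$ (so that $\mathbb{D}_n$ is defined), and $\alpha_1,\dots,\alpha_n\in\mathbb{K}^*$. If $n$ is even, then $X_{\mathbb{D}_n}(\alpha_1,\dots,\alpha_n)\simeq X_{\mathbb{D}_n}(\alpha,\beta,1,\dots,1)$ for some $\alpha,\beta\in\mathbb{K}^*$ depending on the $\alpha_i$. If $n$ is odd, then $X_{\mathbb{D}_n}(\alpha_1,\dots,\alpha_n)\simeq X_{\mathbb{D}_n}(\alpha,1,\dots,1)$ for some $\alpha\in\mathbb{K}^*$ depending on the $\alpha_i$.
   Context: $X_{\mathbb{D}_n}(\alpha_1,\dots,\alpha_n)$ is the affine variety over $\mathbb{K}$ in variables $x_1,\dots,x_n,x'_1,\dots,x'_n$ defined by $x_1x'_1=1+\alpha_1x_3$, $x_2x'_2=1+\alpha_2x_3$, $x_3x'_3=1+\alpha_3x_1x_2x_4$, $x_ix'_i=1+\alpha_ix_{i-1}x_{i+1}$ for $4\le i\le n-1$, $x_nx'_n=1+\alpha_nx_{n-1}$ (with the obvious modifications for $n=3$, where $x_3x'_3=1+\alpha_3x_1x_2$). It corresponds to the tree $\mathbb{D}_n$: vertices $1,2$ are leaves attached to vertex $3$, and $3,4,\dots,n$ form a path. *)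

theory Defs
  imports "HOL-Library.Poly_Mapping"
begin

type_synonym 'a mpoly = "(nat \<Rightarrow>\<^sub>0 nat) \<Rightarrow>\<^sub>0 'a"

definition mVar :: "nat \<Rightarrow> 'a::comm_ring_1 mpoly" where
  "mVar i = Poly_Mapping.single (Poly_Mapping.single i 1) 1"

definition mConst :: "'a::comm_ring_1 \<Rightarrow> 'a mpoly" where
  "mConst c = Poly_Mapping.single 0 c"

definition mvars :: "'a::comm_ring_1 mpoly \<Rightarrow> nat set" where
  "mvars p = \<Union> (Poly_Mapping.keys ` Poly_Mapping.keys p)"

definition msubst :: "(nat \<Rightarrow> 'a::comm_ring_1 mpoly) \<Rightarrow> 'a mpoly \<Rightarrow> 'a mpoly" where
  "msubst g p = (\<Sum>m\<in>Poly_Mapping.keys p.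
      mConst (Poly_Mapping.lookup p m) *
      (\<Prod>i\<in>Poly_Mapping.keys m. g i ^ Poly_Mapping.lookup m i))"

definition mideal :: "nat set \<Rightarrow> 'a::comm_ring_1 mpoly set \<Rightarrow> 'a mpoly set" where
  "mideal V S = {p. \<exists>A f. finite A \<and> A \<subseteq> S \<and> (\<forall>q\<in>A. mvars (f q) \<subseteq> V) \<and>
                        p = (\<Sum>q\<in>A. f q * q)}"

(* K-algebra isomorphism K[x_V]/(S) \<cong> K[x_V]/(T), i.e. isomorphism of the affine
  varieties (schemes) Spec K[x_V]/(S) and Spec K[x_V]/(T): mutually inverse
  polynomial maps given by images of the variables. *)
definition coord_ring_iso :: "nat set \<Rightarrow> 'a::comm_ring_1 mpoly set \<Rightarrow> 'a mpoly set \<Rightarrow> bool" where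
  "coord_ring_iso V S T \<longleftrightarrow>
     (\<exists>F G. (\<forall>i\<in>V. mvars (F i) \<subseteq> V \<and> mvars (G i) \<subseteq> V) \<and>
       (\<forall>q\<in>T. msubst F q \<in> mideal V S) \<and>
       (\<forall>q\<in>S. msubst G q \<in> mideal V T) \<and>
       (\<forall>i\<in>V. msubst G (F i) - mVar i \<in> mideal V T) \<and>
       (\<forall>i\<in>V. msubst F (G i) - mVar i \<in> mideal V S))"

(* The tree D_n on vertices 1..n: 1 and 2 attached to 3, and 3 - 4 - ... - n a path. *)
definition Dn_edge :: "nat \<Rightarrow> nat \<Rightarrow> bool" where
  "Dn_edge i j \<longleftrightarrow> {i, j} = {1, 3} \<or> {i, j} = {2, 3} \<or>
     (3 \<le> i \<and> j = i + 1) \<or> (3 \<le> j \<and> i = j + 1)"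

definition Dn_nbrs :: "nat \<Rightarrow> nat \<Rightarrow> nat set" where
  "Dn_nbrs n i = {j \<in> {1..n}. Dn_edge i j}"

(* Variables: x_i is mVar i and x'_i is mVar (n + i), for 1 \<le> i \<le> n. *)
definition XD_vars :: "nat \<Rightarrow> nat set" where
  "XD_vars n = {1..2*n}"

definition XD_eqs :: "nat \<Rightarrow> (nat \<Rightarrow> 'a::field) \<Rightarrow> 'a mpoly set" where
  "XD_eqs n \<alpha> = (\<lambda>i. mVar i * mVar (n + i) - 1 -
        mConst (\<alpha> i) * (\<Prod>j\<in>Dn_nbrs n i. mVar j)) ` {1..n}"

definition XD_iso :: "nat \<Rightarrow> (nat \<Rightarrow> 'a::field) \<Rightarrow> (nat \<Rightarrow> 'a) \<Rightarrow> bool" where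
  "XD_iso n \<alpha> \<beta> \<longleftrightarrow> coord_ring_iso (XD_vars n) (XD_eqs n \<alpha>) (XD_eqs n \<beta>)"

end

theory Submission
  imports Defs
begin


definition Emon :: "(nat \<Rightarrow> 'a::comm_ring_1 mpoly) \<Rightarrow> (nat \<Rightarrow>\<^sub>0 nat) \<Rightarrow> 'a mpoly" where
  "Emon g m = (\<Prod>i\<in>Poly_Mapping.keys m. g i ^ Poly_Mapping.lookup m i)"

lemma Emon_superset: "finite S \<Longrightarrow> Poly_Mapping.keys m \<subseteq> S \<Longrightarrow>
   Emon g m = (\<Prod>i\<in>S. g i ^ Poly_Mapping.lookup m i)"
  unfolding Emon_def
  by (rule prod.mono_neutral_left) (auto simp: in_keys_iff)

lemma Emon_add: "Emon g (m1 + m2) = Emon g m1 * Emon g m2"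
proof -
  let ?S = "Poly_Mapping.keys m1 \<union> Poly_Mapping.keys m2"
  have "Emon g (m1 + m2) = (\<Prod>i\<in>?S. g i ^ Poly_Mapping.lookup (m1+m2) i)"
    by (rule Emon_superset) (auto dest: set_mp[OF keys_add])
  also have "\<dots> = (\<Prod>i\<in>?S. g i ^ Poly_Mapping.lookup m1 i) * (\<Prod>i\<in>?S. g i ^ Poly_Mapping.lookup m2 i)"
    by (simp add: lookup_add power_add prod.distrib)
  also have "\<dots> = Emon g m1 * Emon g m2"
    using Emon_superset[of ?S m1 g] Emon_superset[of ?S m2 g] by simp
  finally show ?thesis .
qed

lemma Emon_zero[simp]: "Emon g 0 = 1"
  by (simp add: Emon_def)

lemma mConst_0[simp]: "mConst 0 = 0" by (simp add: mConst_def)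
lemma mConst_1[simp]: "mConst 1 = 1" by (simp add: mConst_def)
lemma mConst_add: "mConst (a + b) = mConst a + mConst b" by (simp add: mConst_def single_add)
lemma mConst_uminus: "mConst (- a) = - mConst a" by (simp add: mConst_def single_uminus)
lemma mConst_mult: "mConst (a * b) = mConst a * mConst b" by (simp add: mConst_def mult_single)
lemma mConst_prod: "mConst (\<Prod>j\<in>A. f j) = (\<Prod>j\<in>A. mConst (f j))"
  by (induction A rule: infinite_finite_induct) (auto simp: mConst_mult)

lemma msubst_superset: "finite S \<Longrightarrow> Poly_Mapping.keys p \<subseteq> S \<Longrightarrow>
   msubst g p = (\<Sum>m\<in>S. mConst (Poly_Mapping.lookup p m) * Emon g m)"
  unfolding msubst_def Emon_def[symmetric]
  by (rule sum.mono_neutral_left) (auto simp: in_keys_iff)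

lemma msubst_add: "msubst g (p + q) = msubst g p + msubst g q"
proof -
  let ?S = "Poly_Mapping.keys p \<union> Poly_Mapping.keys q"
  have "msubst g (p + q) = (\<Sum>m\<in>?S. mConst (Poly_Mapping.lookup (p+q) m) * Emon g m)"
    by (rule msubst_superset) (auto dest: set_mp[OF keys_add])
  also have "\<dots> = (\<Sum>m\<in>?S. mConst (Poly_Mapping.lookup p m) * Emon g m) + (\<Sum>m\<in>?S. mConst (Poly_Mapping.lookup q m) * Emon g m)"
    by (simp add: lookup_add mConst_add distrib_right sum.distrib)
  also have "\<dots> = msubst g p + msubst g q"
    using msubst_superset[of ?S p g] msubst_superset[of ?S q g] by simp
  finally show ?thesis .
qed

lemma msubst_uminus: "msubst g (- p) = - msubst g p"
proof -
  have "msubst g (- p) = (\<Sum>m\<in>Poly_Mapping.keys p. mConst (Poly_Mapping.lookup (-p) m) * Emon g m)"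
    by (rule msubst_superset) (auto simp: in_keys_iff)
  also have "\<dots> = - msubst g p"
    by (simp add: msubst_def Emon_def mConst_uminus sum_negf)
  finally show ?thesis .
qed

lemma msubst_diff: "msubst g (p - q) = msubst g p - msubst g q"
  using msubst_add[of g p "-q"] msubst_uminus[of g q] by simp

lemma msubst_zero[simp]: "msubst g 0 = 0"
  by (simp add: msubst_def)

lemma msubst_sum: "msubst g (\<Sum>x\<in>A. f x) = (\<Sum>x\<in>A. msubst g (f x))"
  by (induction A rule: infinite_finite_induct) (auto simp: msubst_add)

lemma msubst_single: "msubst g (Poly_Mapping.single m c) = mConst c * Emon g m"
  by (subst msubst_superset[of "{m}"]) auto

lemma pm_expand: "p = (\<Sum>m\<in>Poly_Mapping.keys p. Poly_Mapping.single m (Poly_Mapping.lookup p m))"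
  by (rule poly_mapping_eqI) (auto simp: lookup_sum lookup_single when_def in_keys_iff
     intro: sum.neutral[THEN sym] simp del: lookup_not_eq_zero_eq_in_keys)

lemma msubst_mult: "msubst g (p * q) = msubst g p * msubst g q"
proof -
  let ?P = "Poly_Mapping.keys p" and ?Q = "Poly_Mapping.keys q"
  have "p * q = (\<Sum>a\<in>?P. Poly_Mapping.single a (Poly_Mapping.lookup p a)) *
       (\<Sum>b\<in>?Q. Poly_Mapping.single b (Poly_Mapping.lookup q b))"
    using pm_expand[of p] pm_expand[of q] by simp
  also have "\<dots> = (\<Sum>a\<in>?P. \<Sum>b\<in>?Q. Poly_Mapping.single (a+b) (Poly_Mapping.lookup p a * Poly_Mapping.lookup q b))"
    by (simp add: sum_distrib_left sum_distrib_right mult_single sum.swap[of _ ?Q])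
  finally have "msubst g (p*q) = (\<Sum>a\<in>?P. \<Sum>b\<in>?Q. mConst (Poly_Mapping.lookup p a) * Emon g a * (mConst (Poly_Mapping.lookup q b) * Emon g b))"
    by (simp add: msubst_sum msubst_single Emon_add mConst_mult mult_ac)
  also have "\<dots> = msubst g p * msubst g q"
    by (simp add: msubst_def Emon_def sum_distrib_left sum_distrib_right sum.swap[of _ ?Q])
  finally show ?thesis .
qed

lemma msubst_one[simp]: "msubst g 1 = 1"
  using msubst_single[of g 0 1] by simp

lemma msubst_prod: "msubst g (\<Prod>x\<in>A. f x) = (\<Prod>x\<in>A. msubst g (f x))"
  by (induction A rule: infinite_finite_induct) (auto simp: msubst_mult)

lemma msubst_mConst[simp]: "msubst g (mConst c) = mConst c"
  using msubst_single[of g 0 c] by (simp add: mConst_def)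

lemma msubst_mVar[simp]: "msubst g (mVar i) = g i"
  unfolding mVar_def by (simp add: msubst_single Emon_def)

lemma mvars_one[simp]: "mvars (1 :: 'a::comm_ring_1 mpoly) = {}"
  by (simp add: mvars_def)

lemma mvars_scaled: "mvars (mConst c * mVar i :: 'a::comm_ring_1 mpoly) \<subseteq> {i}"
  by (simp add: mvars_def mConst_def mVar_def mult_single)



definition eqp :: "nat \<Rightarrow> (nat \<Rightarrow> 'a::field) \<Rightarrow> nat \<Rightarrow> 'a mpoly" where
  "eqp n \<gamma> i = mVar i * mVar (n + i) - 1 - mConst (\<gamma> i) * (\<Prod>j\<in>Dn_nbrs n i. mVar j)"

lemma XD_eqs_eqp: "XD_eqs n \<gamma> = eqp n \<gamma> ` {1..n}"
  by (simp add: XD_eqs_def eqp_def)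

lemma eqp_cong: "\<gamma> i = \<gamma>' i \<Longrightarrow> eqp n \<gamma> i = eqp n \<gamma>' i"
  by (simp add: eqp_def)

definition sc :: "nat \<Rightarrow> (nat \<Rightarrow> 'a::field) \<Rightarrow> nat \<Rightarrow> 'a" where
  "sc n c k = (if k \<le> n then c k else inverse (c (k - n)))"

lemma nbrs_sub: "Dn_nbrs n i \<subseteq> {1..n}"
  by (auto simp: Dn_nbrs_def)

lemma scale_eq:
  fixes c :: "nat \<Rightarrow> 'a::field"
  assumes i: "i \<in> {1..n}" and nz: "\<forall>j\<in>{1..n}. c j \<noteq> 0"
  shows "msubst (\<lambda>k. mConst (sc n c k) * mVar k) (eqp n \<gamma> i)
       = eqp n (\<lambda>i. \<gamma> i * (\<Prod>j\<in>Dn_nbrs n i. c j)) i"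
proof -
  let ?F = "\<lambda>k. mConst (sc n c k) * mVar k :: 'a mpoly"
  have p: "(\<Prod>j\<in>Dn_nbrs n i. ?F j) = mConst (\<Prod>j\<in>Dn_nbrs n i. c j) * (\<Prod>j\<in>Dn_nbrs n i. mVar j)"
  proof -
    have "(\<Prod>j\<in>Dn_nbrs n i. ?F j) = (\<Prod>j\<in>Dn_nbrs n i. mConst (c j) * mVar j)"
      by (rule prod.cong) (use nbrs_sub[of n i] in \<open>auto simp: sc_def\<close>)
    then show ?thesis by (simp add: prod.distrib mConst_prod)
  qed
  have ci: "c i \<noteq> 0" using nz i by auto
  have v: "?F i * ?F (n + i) = mVar i * mVar (n + i)"
  proof -
    have "?F i * ?F (n + i) = mConst (c i * inverse (c i)) * (mVar i * mVar (n + i))"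
      using i by (simp add: sc_def mConst_mult mult_ac)
    then show ?thesis using ci by simp
  qed
  have "msubst ?F (eqp n \<gamma> i) = ?F i * ?F (n+i) - 1 - mConst (\<gamma> i) * (\<Prod>j\<in>Dn_nbrs n i. ?F j)"
    by (simp only: eqp_def msubst_diff msubst_mult msubst_prod msubst_mVar msubst_one msubst_mConst)
  also have "\<dots> = mVar i * mVar (n + i) - 1 - mConst (\<gamma> i) * (mConst (\<Prod>j\<in>Dn_nbrs n i. c j) * (\<Prod>j\<in>Dn_nbrs n i. mVar j))"
    by (simp only: p v)
  finally show ?thesis by (simp add: eqp_def mConst_mult mult_ac)
qed

lemma mem_mideal: "x \<in> S \<Longrightarrow> x \<in> mideal V S"
  unfolding mideal_def
  by (rule CollectI, rule exI[of _ "{x}"], rule exI[of _ "\<lambda>_. 1"]) auto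

lemma zero_mideal: "0 \<in> mideal V S"
  unfolding mideal_def
  by (rule CollectI, rule exI[of _ "{}"]) auto

lemma XD_iso_scale:
  fixes c :: "nat \<Rightarrow> 'a::field"
  assumes nz: "\<forall>j\<in>{1..n}. c j \<noteq> 0"
    and eq: "\<forall>i\<in>{1..n}. \<beta> i * (\<Prod>j\<in>Dn_nbrs n i. c j) = \<alpha> i"
  shows "XD_iso n \<alpha> \<beta>"
proof -
  define c' where "c' = (\<lambda>j. inverse (c j))"
  have nz': "\<forall>j\<in>{1..n}. c' j \<noteq> 0" using nz by (simp add: c'_def)
  define F where "F = (\<lambda>k. mConst (sc n c k) * mVar k :: 'a mpoly)"
  define G where "G = (\<lambda>k. mConst (sc n c' k) * mVar k :: 'a mpoly)"
  have eq2: "\<alpha> i * (\<Prod>j\<in>Dn_nbrs n i. c' j) = \<beta> i" if "i \<in> {1..n}" for i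
  proof -
    have "(\<Prod>j\<in>Dn_nbrs n i. c j) \<noteq> 0"
      using nz nbrs_sub[of n i] finite_subset[OF nbrs_sub[of n i]] by (auto simp: prod_zero_iff)
    moreover have "(\<Prod>j\<in>Dn_nbrs n i. c' j) = inverse (\<Prod>j\<in>Dn_nbrs n i. c j)"
      using prod_inversef[of c "Dn_nbrs n i"] by (simp add: c'_def o_def)
    ultimately show ?thesis using eq that by (metis mult.assoc mult.right_neutral right_inverse)
  qed
  have inv: "sc n c' k * sc n c k = 1" if "k \<in> XD_vars n" for k
  proof (cases "k \<le> n")
    case True then show ?thesis using that nz by (auto simp: sc_def c'_def XD_vars_def)
  next
    case False
    then have "k - n \<in> {1..n}" using that by (auto simp: XD_vars_def)
    then have "c (k - n) \<noteq> 0" using nz by blast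
    then show ?thesis using False by (simp add: sc_def c'_def)
  qed
  have c1: "\<forall>i\<in>XD_vars n. mvars (F i) \<subseteq> XD_vars n \<and> mvars (G i) \<subseteq> XD_vars n"
    using mvars_scaled unfolding F_def G_def by fast
  have c2: "\<forall>q\<in>XD_eqs n \<beta>. msubst F q \<in> mideal (XD_vars n) (XD_eqs n \<alpha>)"
  proof
    fix q assume "q \<in> XD_eqs n \<beta>"
    then obtain i where i: "i \<in> {1..n}" and q: "q = eqp n \<beta> i" by (auto simp: XD_eqs_eqp)
    have "msubst F q = eqp n \<alpha> i"
      unfolding q F_def using scale_eq[OF i nz] eqp_cong eq i by metis
    then show "msubst F q \<in> mideal (XD_vars n) (XD_eqs n \<alpha>)"
      using i by (auto intro!: mem_mideal simp: XD_eqs_eqp)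
  qed
  have c3: "\<forall>q\<in>XD_eqs n \<alpha>. msubst G q \<in> mideal (XD_vars n) (XD_eqs n \<beta>)"
  proof
    fix q assume "q \<in> XD_eqs n \<alpha>"
    then obtain i where i: "i \<in> {1..n}" and q: "q = eqp n \<alpha> i" by (auto simp: XD_eqs_eqp)
    have "msubst G q = eqp n \<beta> i"
      unfolding q G_def using scale_eq[OF i nz'] eqp_cong eq2 i by metis
    then show "msubst G q \<in> mideal (XD_vars n) (XD_eqs n \<beta>)"
      using i by (auto intro!: mem_mideal simp: XD_eqs_eqp)
  qed
  have c4: "\<forall>i\<in>XD_vars n. msubst G (F i) - mVar i \<in> mideal (XD_vars n) (XD_eqs n \<beta>)"
  proof
    fix i assume "i \<in> XD_vars n"
    have "msubst G (F i) = mConst (sc n c' i * sc n c i) * mVar i"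
      by (simp add: F_def G_def msubst_mult mConst_mult mult_ac)
    then show "msubst G (F i) - mVar i \<in> mideal (XD_vars n) (XD_eqs n \<beta>)"
      using inv[OF \<open>i \<in> XD_vars n\<close>] by (simp add: zero_mideal)
  qed
  have c5: "\<forall>i\<in>XD_vars n. msubst F (G i) - mVar i \<in> mideal (XD_vars n) (XD_eqs n \<alpha>)"
  proof
    fix i assume "i \<in> XD_vars n"
    have "msubst F (G i) = mConst (sc n c' i * sc n c i) * mVar i"
      by (simp add: F_def G_def msubst_mult mConst_mult mult_ac)
    then show "msubst F (G i) - mVar i \<in> mideal (XD_vars n) (XD_eqs n \<alpha>)"
      using inv[OF \<open>i \<in> XD_vars n\<close>] by (simp add: zero_mideal)
  qed
  show ?thesis
    unfolding XD_iso_def coord_ring_iso_def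
    using c1 c2 c3 c4 c5 by blast
qed



fun dd :: "(nat \<Rightarrow> 'a::field) \<Rightarrow> nat \<Rightarrow> 'a \<Rightarrow> nat \<Rightarrow> 'a" where
  "dd \<alpha> n t 0 = 1"
| "dd \<alpha> n t (Suc 0) = t"
| "dd \<alpha> n t (Suc (Suc m)) = \<alpha> (n - m) / dd \<alpha> n t m"

lemma dd_nz: "t \<noteq> 0 \<Longrightarrow> \<forall>i\<in>{1..n}. \<alpha> i \<noteq> 0 \<Longrightarrow> m \<le> n \<Longrightarrow> dd \<alpha> n t m \<noteq> 0"
  by (induction \<alpha> n t m rule: dd.induct) auto

lemma dd_hit:
  assumes "\<forall>i\<in>{1..n}. \<alpha> i \<noteq> 0"
  shows "2*k+1 < n \<Longrightarrow> y \<noteq> 0 \<Longrightarrow> \<exists>t. t \<noteq> 0 \<and> dd \<alpha> n t (2*k+1) = y"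
proof (induction k arbitrary: y)
  case 0 then show ?case by auto
next
  case (Suc k)
  have a: "\<alpha> (n - (2*k+1)) \<noteq> 0" using assms Suc.prems by auto
  have "\<exists>t. t \<noteq> 0 \<and> dd \<alpha> n t (2*k+1) = \<alpha> (n - (2*k+1)) / y"
    using Suc.IH[of "\<alpha> (n - (2*k+1)) / y"] Suc.prems a by auto
  then obtain t where t: "t \<noteq> 0" "dd \<alpha> n t (2*k+1) = \<alpha> (n - (2*k+1)) / y"
    by blast
  have "2 * Suc k + 1 = Suc (Suc (2*k+1))" by simp
  then have "dd \<alpha> n t (2 * Suc k + 1) = \<alpha> (n - (2*k+1)) / dd \<alpha> n t (2*k+1)"
    by (simp only: dd.simps)
  then show ?case using t a Suc.prems by auto
qed

lemma nb1: "n \<ge> 3 \<Longrightarrow> Dn_nbrs n 1 = {3}"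
  by (auto simp: Dn_nbrs_def Dn_edge_def doubleton_eq_iff)
lemma nb2: "n \<ge> 3 \<Longrightarrow> Dn_nbrs n 2 = {3}"
  by (auto simp: Dn_nbrs_def Dn_edge_def doubleton_eq_iff)
lemma nb3: "n \<ge> 3 \<Longrightarrow> Dn_nbrs n 3 = {1,2} \<union> (if 4 \<le> n then {4} else {})"
  by (auto simp: Dn_nbrs_def Dn_edge_def doubleton_eq_iff)
lemma nbi: "4 \<le> i \<Longrightarrow> i \<le> n \<Longrightarrow> Dn_nbrs n i = {i-1} \<union> (if i+1 \<le> n then {i+1} else {})"
  by (auto simp: Dn_nbrs_def Dn_edge_def doubleton_eq_iff)

lemma prod3: "n \<ge> 3 \<Longrightarrow> c (n+1) = 1 \<Longrightarrow> (\<Prod>j\<in>Dn_nbrs n 3. c j) = c 1 * c 2 * c 4"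
  by (cases "n = 3") (auto simp: nb3 mult_ac)

lemma prodi: "4 \<le> i \<Longrightarrow> i \<le> n \<Longrightarrow> c (n+1) = 1 \<Longrightarrow> (\<Prod>j\<in>Dn_nbrs n i. c j) = c (i-1) * c (i+1)"
  by (cases "i = n") (auto simp: nbi mult_ac)

lemma sol:
  fixes \<alpha> :: "nat \<Rightarrow> 'a::field"
  assumes n: "n \<ge> 3" and nz: "\<forall>i\<in>{1..n}. \<alpha> i \<noteq> 0" and t: "t \<noteq> 0"
  shows "\<exists>c. (\<forall>j\<in>{1..n}. c j \<noteq> 0) \<and> (\<forall>i\<in>{3..n}. (\<Prod>j\<in>Dn_nbrs n i. c j) = \<alpha> i)
           \<and> c 3 = dd \<alpha> n t (n-2)"
proof -
  define c where "c k = (if k = 1 then \<alpha> 3 / dd \<alpha> n t (n-3) else if k = 2 then 1 else dd \<alpha> n t (n+1-k))" for k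
  have dnz: "m \<le> n \<Longrightarrow> dd \<alpha> n t m \<noteq> 0" for m using dd_nz[OF t nz] .
  have a3: "\<alpha> 3 \<noteq> 0" using nz n by auto
  have c1: "\<forall>j\<in>{1..n}. c j \<noteq> 0"
    using dnz a3 by (auto simp: c_def)
  have cn: "c (n+1) = 1" using n by (simp add: c_def)
  have c3: "c 3 = dd \<alpha> n t (n-2)" by (simp add: c_def numeral_eq_Suc)
  have e3: "(\<Prod>j\<in>Dn_nbrs n 3. c j) = \<alpha> 3"
  proof -
    have "c 4 = dd \<alpha> n t (n-3)" by (simp add: c_def)
    then show ?thesis using prod3[of n c, OF n cn] dnz[of "n-3"] by (simp add: c_def)
  qed
  have ei: "(\<Prod>j\<in>Dn_nbrs n i. c j) = \<alpha> i" if i: "4 \<le> i" "i \<le> n" for i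
  proof -
    have e: "n + 1 - (i - 1) = Suc (Suc (n - i))" using i by simp
    have "i - 1 \<noteq> 1" "i - 1 \<noteq> 2" using i by auto
    then have "c (i-1) = dd \<alpha> n t (n + 1 - (i - 1))" unfolding c_def by presburger
    also have "\<dots> = \<alpha> (n - (n - i)) / dd \<alpha> n t (n - i)" by (simp only: e dd.simps)
    also have "n - (n - i) = i" using i by simp
    finally have "c (i-1) = \<alpha> i / dd \<alpha> n t (n - i)" .
    moreover have "c (i+1) = dd \<alpha> n t (n - i)" using i by (simp add: c_def)
    ultimately show ?thesis using prodi[of i n c, OF i cn] dnz[of "n-i"] by simp
  qed
  have "\<forall>i\<in>{3..n}. (\<Prod>j\<in>Dn_nbrs n i. c j) = \<alpha> i"
  proof
    fix i assume "i \<in> {3..n}"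
    then show "(\<Prod>j\<in>Dn_nbrs n i. c j) = \<alpha> i"
      using e3 ei by (cases "i = 3") auto
  qed
  then show ?thesis using c1 c3 by blast
qed

theorem mainTheorem15:
  fixes \<alpha> :: "nat \<Rightarrow> 'a::field" and n :: nat
  assumes "n \<ge> 3"
    and "\<forall>i\<in>{1..n}. \<alpha> i \<noteq> 0"
  shows "(even n \<longrightarrow> (\<exists>a b. a \<noteq> 0 \<and> b \<noteq> 0 \<and>
            XD_iso n \<alpha> (\<lambda>i. if i = 1 then a else if i = 2 then b else 1)))
       \<and> (odd n \<longrightarrow> (\<exists>a. a \<noteq> 0 \<and>
            XD_iso n \<alpha> (\<lambda>i. if i = 1 then a else 1)))"
proof (intro conjI impI)
  assume "even n"
  obtain c where cnz: "\<forall>j\<in>{1..n}. c j \<noteq> 0"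
     and ce: "\<forall>i\<in>{3..n}. (\<Prod>j\<in>Dn_nbrs n i. c j) = \<alpha> i"
    using sol[OF assms, of 1] by auto
  have c3: "c 3 \<noteq> 0" using cnz assms(1) by auto
  have a1: "\<alpha> 1 \<noteq> 0" "\<alpha> 2 \<noteq> 0" using assms by auto
  let ?\<beta> = "\<lambda>i. if i = 1 then \<alpha> 1 / c 3 else if i = 2 then \<alpha> 2 / c 3 else 1"
  have "XD_iso n \<alpha> ?\<beta>"
  proof (rule XD_iso_scale[OF cnz], intro ballI)
    fix i assume i: "i \<in> {1..n}"
    show "?\<beta> i * (\<Prod>j\<in>Dn_nbrs n i. c j) = \<alpha> i"
    proof (cases "i = 1 \<or> i = 2")
      case True then show ?thesis using nb1[OF assms(1)] nb2[OF assms(1)] c3 by auto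
    next
      case False then show ?thesis using ce i by auto
    qed
  qed
  then show "\<exists>a b. a \<noteq> 0 \<and> b \<noteq> 0 \<and>
            XD_iso n \<alpha> (\<lambda>i. if i = 1 then a else if i = 2 then b else 1)"
    using a1 c3 by (intro exI[of _ "\<alpha> 1 / c 3"] exI[of _ "\<alpha> 2 / c 3"]) auto
next
  assume "odd n"
  then obtain k where k: "n - 2 = 2*k+1" "2*k+1 < n" using assms(1)
  proof -
    from \<open>odd n\<close> obtain m where m: "n = 2*m+1" by (auto elim: oddE)
    then have "n - 2 = 2*(m-1)+1" "2*(m-1)+1 < n" using assms(1) by auto
    then show ?thesis using that by blast
  qed
  have a1: "\<alpha> 1 \<noteq> 0" "\<alpha> 2 \<noteq> 0" using assms by auto
  obtain t where t: "t \<noteq> 0" "dd \<alpha> n t (2*k+1) = \<alpha> 2"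
    using dd_hit[OF assms(2) k(2) a1(2)] by auto
  obtain c where cnz: "\<forall>j\<in>{1..n}. c j \<noteq> 0"
     and ce: "\<forall>i\<in>{3..n}. (\<Prod>j\<in>Dn_nbrs n i. c j) = \<alpha> i" and c3: "c 3 = \<alpha> 2"
    using sol[OF assms t(1)] t(2) k(1) by auto
  let ?\<beta> = "\<lambda>i. if i = 1 then \<alpha> 1 / \<alpha> 2 else 1"
  have "XD_iso n \<alpha> ?\<beta>"
  proof (rule XD_iso_scale[OF cnz], intro ballI)
    fix i assume i: "i \<in> {1..n}"
    show "?\<beta> i * (\<Prod>j\<in>Dn_nbrs n i. c j) = \<alpha> i"
    proof (cases "i = 1 \<or> i = 2")
      case True then show ?thesis using nb1[OF assms(1)] nb2[OF assms(1)] c3 a1 by auto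
    next
      case False then show ?thesis using ce i by auto
    qed
  qed
  then show "\<exists>a. a \<noteq> 0 \<and> XD_iso n \<alpha> (\<lambda>i. if i = 1 then a else 1)"
    using a1 by (intro exI[of _ "\<alpha> 1 / \<alpha> 2"]) auto
qed

end
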